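(* Let $n \geq 2$, $R > 0$, and let $m$ be a uniform (rotation-invariant) measure on $S^{n-1}_R = \{x\in\mathbb{R}^n : \|x\|=R\}$, normalized or not. Let $\Psi:\mathbb{R}\to\mathbb{R}$ be convex and uniformly continuous, let $f:S^{n-1}_R\to[0,1]$ be integrable, and let $K:\mathbb{R}\to\mathbb{R}$ be non-decreasing, bounded and measurable. For $g: S^{n-1}_R \to \mathbb{R}$ write $Kg(x) = \int_{S^{n-1}_R} K(\langle x,y\rangle) g(y)\,dm(y)$. Then for every hyperplane $\sigma$ through the origin that does not contain $r = (R,0,\ldots,0)$, \[ \int_{S^{n-1}_R} \Psi(Kf(x))\,dm(x) \leq \int_{S^{n-1}_R} \Psi(Kf^{\sigma}(x))\,dm(x). \]
   Context: For a hyperplane $\sigma$ through the origin not containing $r$, let $v$ be the unit normal vector of $\sigma$ with $\langle v, r\rangle > 0$; let $H^+_\sigma = \{x \in S^{n-1}_R : \langle x,v\rangle \geq 0\}$ (the hemisphere containing $r$) and $H^-_\sigma = \{x\in S^{n-1}_R : \langle x, v\rangle < 0\}$. For $x \in S^{n-1}_R$, $\sigma x$ denotes the reflection of $x$ across $\sigma$. The polarization of $f$ with respect to $\sigma$ is $f^\sigma(x) = \max\{f(x), f(\sigma x)\}$ if $x \in H^+_\sigma$ and $f^\sigma(x) = \min\{f(x), f(\sigma x)\}$ if $x\in H^-_\sigma$. *)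

theory Defs
  imports "HOL-Analysis.Analysis"
begin

definition hp_reflect :: "real^'n \<Rightarrow> real^'n \<Rightarrow> real^'n" where
  "hp_reflect v x = x - (2 * (x \<bullet> v)) *\<^sub>R v"

text \<open>Polarization of f with respect to the hyperplane with unit normal v
  (v oriented so that the closed half-space x \<bullet> v \<ge> 0 contains r).\<close>
definition polarization :: "real^'n \<Rightarrow> (real^'n \<Rightarrow> real) \<Rightarrow> real^'n \<Rightarrow> real" where
  "polarization v f x =
     (if x \<bullet> v \<ge> 0 then max (f x) (f (hp_reflect v x)) else min (f x) (f (hp_reflect v x)))"

definition Kop :: "(real^'n) measure \<Rightarrow> (real \<Rightarrow> real) \<Rightarrow> (real^'n \<Rightarrow> real) \<Rightarrow> real^'n \<Rightarrow> real" where
  "Kop m K g x = (\<integral>y. K (x \<bullet> y) * g y \<partial>m)"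

definition uniform_sphere_measure :: "real \<Rightarrow> (real^'n) measure \<Rightarrow> bool" where
  "uniform_sphere_measure R m \<longleftrightarrow>
     sets m = sets borel \<and> finite_measure m \<and> emeasure m (- sphere 0 R) = 0 \<and>
     (\<forall>T. orthogonal_transformation T \<and> det (matrix T) = 1 \<longrightarrow>
        (\<forall>A \<in> sets m. emeasure m (T -` A) = emeasure m A))"

end

theory Submission
  imports Defs
begin

definition rot :: "real^'n \<Rightarrow> real^'n \<Rightarrow> real \<Rightarrow> real^'n \<Rightarrow> real^'n" where
  "rot v w t x = x + ((cos t - 1) * (x \<bullet> v) - sin t * (x \<bullet> w)) *\<^sub>R v
                   + ((cos t - 1) * (x \<bullet> w) + sin t * (x \<bullet> v)) *\<^sub>R w"

locale vw =
  fixes v w :: "real^'n"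
  assumes vv: "v \<bullet> v = 1" and ww: "w \<bullet> w = 1" and vw0: "v \<bullet> w = 0"
begin

lemma wv0: "w \<bullet> v = 0" using vw0 by (simp add: inner_commute)

lemma rot_v: "rot v w t x \<bullet> v = cos t * (x \<bullet> v) - sin t * (x \<bullet> w)"
  by (simp add: rot_def inner_add_left vv wv0 algebra_simps)

lemma rot_w: "rot v w t x \<bullet> w = cos t * (x \<bullet> w) + sin t * (x \<bullet> v)"
  by (simp add: rot_def inner_add_left ww vw0 algebra_simps)

lemma rot_add: "rot v w s (rot v w t x) = rot v w (s + t) x"
proof -
  define a where "a = x \<bullet> v" define b where "b = x \<bullet> w"
  define A where "A = (cos t - 1) * a - sin t * b"
  define B where "B = (cos t - 1) * b + sin t * a"
  define C where "C = (cos s - 1) * (cos t * a - sin t * b) - sin s * (cos t * b + sin t * a)"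
  define D where "D = (cos s - 1) * (cos t * b + sin t * a) + sin s * (cos t * a - sin t * b)"
  have s1: "rot v w s (rot v w t x) = rot v w t x + C *\<^sub>R v + D *\<^sub>R w"
    unfolding rot_def[of v w s "rot v w t x"] rot_v rot_w C_def D_def a_def b_def ..
  have s2: "rot v w t x = x + A *\<^sub>R v + B *\<^sub>R w"
    unfolding rot_def A_def B_def a_def b_def ..
  have e1: "A + C = (cos (s+t) - 1) * a - sin (s+t) * b"
    unfolding A_def C_def by (simp add: cos_add sin_add algebra_simps)
  have e2: "B + D = (cos (s+t) - 1) * b + sin (s+t) * a"
    unfolding B_def D_def by (simp add: cos_add sin_add algebra_simps)
  have "rot v w s (rot v w t x) = x + (A + C) *\<^sub>R v + (B + D) *\<^sub>R w"
    by (simp only: s1, simp only: s2 scaleR_add_left add_ac)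
  also have "\<dots> = rot v w (s + t) x"
    unfolding e1 e2 rot_def a_def b_def ..
  finally show ?thesis .
qed

lemma rot_0: "rot v w 0 x = x" by (simp add: rot_def)

lemma rot_linear: "linear (rot v w t)"
  by (rule linearI) (simp_all add: rot_def inner_add_left algebra_simps scaleR_add_left)

lemma rot_inner: "rot v w t x \<bullet> rot v w t y = x \<bullet> y"
proof -
  define a where "a = x \<bullet> v" define b where "b = x \<bullet> w"
  define a' where "a' = y \<bullet> v" define b' where "b' = y \<bullet> w"
  have sc: "sin t ^ 2 + cos t ^ 2 = 1" by simp
  have "rot v w t x \<bullet> rot v w t y = x \<bullet> y + ((cos t - 1) * a' - sin t * b') * a
     + ((cos t - 1) * b' + sin t * a') * b + ((cos t - 1) * a - sin t * b) * a'
     + ((cos t - 1) * b + sin t * a) * b'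
     + ((cos t - 1) * a - sin t * b) * ((cos t - 1) * a' - sin t * b')
     + ((cos t - 1) * b + sin t * a) * ((cos t - 1) * b' + sin t * a')"
    unfolding rot_def a_def b_def a'_def b'_def
    by (simp add: inner_add_left inner_add_right vv ww vw0 wv0 inner_commute algebra_simps)
  also have "\<dots> = x \<bullet> y" using sc by algebra
  finally show ?thesis .
qed

lemma rot_orth: "orthogonal_transformation (rot v w t)"
  unfolding orthogonal_transformation_def using rot_linear rot_inner by blast

lemma rot_det: "det (matrix (rot v w t)) = 1"
proof -
  have c: "rot v w t = rot v w (t/2) \<circ> rot v w (t/2)"
    by (rule ext) (simp add: rot_add)
  have "det (matrix (rot v w t)) = det (matrix (rot v w (t/2))) * det (matrix (rot v w (t/2)))"
    unfolding c by (simp add: matrix_compose rot_linear det_mul)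
  moreover have "det (matrix (rot v w (t/2))) = 1 \<or> det (matrix (rot v w (t/2))) = -1"
    using det_orthogonal_matrix orthogonal_transformation_matrix rot_orth by blast
  ultimately show ?thesis by auto
qed

lemma rot_periodic: "rot v w (t + 2*pi) x = rot v w t x"
  by (simp add: rot_def)

lemma rot_cont: "continuous_on UNIV (\<lambda>p. rot v w (fst p) (snd p))"
  unfolding rot_def by (intro continuous_intros)

lemma refl_rot: "hp_reflect v (rot v w t x) = rot v w (-t) (hp_reflect v x)"
proof -
  have a: "hp_reflect v x \<bullet> v = - (x \<bullet> v)" by (simp add: hp_reflect_def inner_diff_left vv)
  have b: "hp_reflect v x \<bullet> w = x \<bullet> w" by (simp add: hp_reflect_def inner_diff_left vw0)
  show ?thesis
    unfolding hp_reflect_def[of v "rot v w t x"] rot_v rot_def[of v w "-t" "hp_reflect v x"] a b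
  proof -
    define P where "P = (cos t - 1) * (x \<bullet> v) - sin t * (x \<bullet> w)"
    define Q where "Q = (cos t - 1) * (x \<bullet> w) + sin t * (x \<bullet> v)"
    define C where "C = 2 * (cos t * (x \<bullet> v) - sin t * (x \<bullet> w))"
    define P' where "P' = (cos (- t) - 1) * - (x \<bullet> v) - sin (- t) * (x \<bullet> w)"
    define Q' where "Q' = (cos (- t) - 1) * (x \<bullet> w) + sin (- t) * - (x \<bullet> v)"
    have l: "rot v w t x - C *\<^sub>R v = x + (P - C) *\<^sub>R v + Q *\<^sub>R w"
      unfolding rot_def P_def[symmetric] Q_def[symmetric] by (simp add: scaleR_diff_left)
    have r: "hp_reflect v x + P' *\<^sub>R v + Q' *\<^sub>R w = x + (P' - 2 * (x \<bullet> v)) *\<^sub>R v + Q' *\<^sub>R w"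
      unfolding hp_reflect_def by (simp add: scaleR_diff_left)
    have "P - C = P' - 2 * (x \<bullet> v)" "Q = Q'" unfolding P_def C_def P'_def Q_def Q'_def
      by (simp_all add: algebra_simps)
    then show "rot v w t x - C *\<^sub>R v = hp_reflect v x + P' *\<^sub>R v + Q' *\<^sub>R w"
      using l r by simp
  qed
qed

lemma refl_orbit: "\<exists>p. -2*pi \<le> p \<and> p \<le> 2*pi \<and> hp_reflect v x = rot v w p x"
proof -
  define a where "a = x \<bullet> v" define b where "b = x \<bullet> w"
  have key: "\<exists>p. -2*pi \<le> p \<and> p \<le> 2*pi \<and> a * cos p - b * sin p = - a \<and> b * cos p + a * sin p = b"
  proof (cases "a\<^sup>2 + b\<^sup>2 = 0")
    case True then have "a = 0" by (simp add: sum_power2_eq_zero_iff)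
    then show ?thesis by (intro exI[of _ 0]) simp
  next
    case False
    define r where "r = sqrt (a\<^sup>2 + b\<^sup>2)"
    have r0: "r > 0" using False r_def by (simp add: add_nonneg_nonneg sum_power2_ge_zero less_le)
    have r2: "r^2 = a\<^sup>2 + b\<^sup>2" unfolding r_def by (simp add: sum_power2_ge_zero)
    have "(a/r)\<^sup>2 + (b/r)\<^sup>2 = 1" using r0 r2 False by (simp add: power_divide add_divide_distrib[symmetric])
    then obtain q where q: "a/r = cos q" "b/r = sin q" "0 \<le> q" "q < 2*pi" using sincos_total_2pi by metis
    have aq: "a = r * cos q" "b = r * sin q" using q r0 by (auto simp: field_simps)
    define p where "p = pi - 2*q"
    have "cos (q + p) = - cos q" "sin (q + p) = sin q" unfolding p_def by simp_all
    then have "cos q * cos p - sin q * sin p = - cos q" "sin q * cos p + cos q * sin p = sin q"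
      by (simp_all add: cos_add sin_add)
    then have "a * cos p - b * sin p = - a \<and> b * cos p + a * sin p = b"
      unfolding aq by (metis (no_types, opaque_lifting) distrib_left mult.assoc right_diff_distrib mult_minus_right)
    moreover have "-3*pi \<le> p" "p \<le> pi" using q unfolding p_def by auto
    ultimately show ?thesis
    proof (cases "-2*pi \<le> p")
      case True
      then show ?thesis using \<open>p \<le> pi\<close> \<open>a * cos p - b * sin p = - a \<and> b * cos p + a * sin p = b\<close>
        by (intro exI[of _ p]) auto
    next
      case False
      then show ?thesis using \<open>-3*pi \<le> p\<close> \<open>a * cos p - b * sin p = - a \<and> b * cos p + a * sin p = b\<close>
        by (intro exI[of _ "p + 2*pi"]) auto
    qed
  qed
  then obtain p where p: "a * cos p - b * sin p = - a" "b * cos p + a * sin p = b" and pb: "-2*pi \<le> p" "p \<le> 2*pi" by blast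
  have c1: "(cos p - 1) * a - sin p * b = -2 * a" using p by (simp add: algebra_simps)
  have c2: "(cos p - 1) * b + sin p * a = 0" using p by (simp add: algebra_simps)
  show ?thesis
    using pb by (intro exI[of _ p]) (simp add: rot_def hp_reflect_def c1[unfolded a_def b_def] c2[unfolded a_def b_def])
qed

end

lemma int_ind_bounded:
  fixes h :: "real \<Rightarrow> real"
  assumes [measurable]: "h \<in> borel_measurable borel" and hb: "\<And>t. \<bar>h t\<bar> \<le> B"
  shows "integrable lborel (\<lambda>t. indicator {a..<b} t * h t)"
proof -
  have i: "integrable lborel (\<lambda>t. indicator {a..<b} t * B)"
  proof -
    have "integrable lborel (indicat_real {a..<b})"
      by (cases "a \<le> b") (auto simp add: integrable_indicator_iff)
    then show ?thesis by (rule integrable_mult_left)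
  qed
  have m: "(\<lambda>t. indicator {a..<b} t * h t) \<in> borel_measurable lborel" by measurable
  have ae: "AE x in lborel. norm (indicator {a..<b} x * h x) \<le> norm (indicator {a..<b} x * B)"
    using hb by (auto simp: indicator_def abs_mult intro!: AE_I2) (meson abs_ge_self order_trans)
  show ?thesis by (rule Bochner_Integration.integrable_bound[OF i m ae])
qed

lemma lborel_shift: "(\<integral>x. f x \<partial>lborel) = (\<integral>x. f (c + x) \<partial>lborel)" for f :: "real \<Rightarrow> real"
  using lborel_integral_real_affine[where c=1 and t=c and f=f] by simp

lemma per_shift0:
  fixes h :: "real \<Rightarrow> real"
  assumes hm[measurable]: "h \<in> borel_measurable borel" and hb: "\<And>t. \<bar>h t\<bar> \<le> B"
    and per: "\<And>t. h (t + 2*pi) = h t" and p: "0 \<le> p" "p \<le> 2*pi"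
  shows "(\<integral>t. indicator {0..<2*pi} t * h (t + p) \<partial>lborel) = (\<integral>t. indicator {0..<2*pi} t * h t \<partial>lborel)"
proof -
  note ii = int_ind_bounded[OF hm hb]
  have 1: "(\<integral>t. indicator {0..<2*pi} t * h (t + p) \<partial>lborel) = (\<integral>t. indicator {p..<p+2*pi} t * h t \<partial>lborel)"
    using lborel_shift[of "\<lambda>t. indicator {p..<p+2*pi} t * h t" p]
    by (simp add: indicator_def add.commute)
  have 2: "(\<integral>t. indicator {p..<p+2*pi} t * h t \<partial>lborel) =
      (\<integral>t. indicator {p..<2*pi} t * h t \<partial>lborel) + (\<integral>t. indicator {2*pi..<p+2*pi} t * h t \<partial>lborel)"
    apply (subst Bochner_Integration.integral_add[symmetric, OF ii ii])
    apply (rule Bochner_Integration.integral_cong[OF refl])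
    using p by (auto simp: indicator_def)
  have 3: "(\<integral>t. indicator {2*pi..<p+2*pi} t * h t \<partial>lborel) = (\<integral>t. indicator {0..<p} t * h t \<partial>lborel)"
    using lborel_shift[of "\<lambda>t. indicator {2*pi..<p+2*pi} t * h t" "2*pi"]
    by (simp add: indicator_def per[unfolded add.commute[of _ "2*pi"]])
  have 4: "(\<integral>t. indicator {0..<2*pi} t * h t \<partial>lborel) =
      (\<integral>t. indicator {0..<p} t * h t \<partial>lborel) + (\<integral>t. indicator {p..<2*pi} t * h t \<partial>lborel)"
    apply (subst Bochner_Integration.integral_add[symmetric, OF ii ii])
    apply (rule Bochner_Integration.integral_cong[OF refl])
    using p by (auto simp: indicator_def)
  show ?thesis using 1 2 3 4 by simp
qed

lemma per_shift:
  fixes h :: "real \<Rightarrow> real"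
  assumes hm[measurable]: "h \<in> borel_measurable borel" and hb: "\<And>t. \<bar>h t\<bar> \<le> B"
    and per: "\<And>t. h (t + 2*pi) = h t" and p: "-2*pi \<le> p" "p \<le> 2*pi"
  shows "(\<integral>t. indicator {0..<2*pi} t * h (t + p) \<partial>lborel) = (\<integral>t. indicator {0..<2*pi} t * h t \<partial>lborel)"
proof (cases "0 \<le> p")
  case True then show ?thesis using per_shift0[OF hm hb per] p by blast
next
  case False
  have "h (t + (p + 2*pi)) = h (t + p)" for t using per[of "t+p"] by (simp add: algebra_simps)
  then show ?thesis using per_shift0[OF hm hb per, of "p + 2*pi"] p False by simp
qed

lemma per_refl:
  fixes h :: "real \<Rightarrow> real"
  assumes hm[measurable]: "h \<in> borel_measurable borel" and hb: "\<And>t. \<bar>h t\<bar> \<le> B"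
    and per: "\<And>t. h (t + 2*pi) = h t"
  shows "(\<integral>t. indicator {0..<2*pi} t * h (- t) \<partial>lborel) = (\<integral>t. indicator {0..<2*pi} t * h t \<partial>lborel)"
proof -
  have "(\<integral>t. indicator {0..<2*pi} t * h t \<partial>lborel) =
      (\<integral>x. indicator {0..<2*pi} (2*pi + (-1) * x) * h (2*pi + (-1) * x) \<partial>lborel)"
    using lborel_integral_real_affine[where c="-1" and t="2*pi" and f="\<lambda>t. indicator {0..<2*pi} t * h t"] by simp
  also have "\<dots> = (\<integral>x. indicator {0..<2*pi} x * h (- x) \<partial>lborel)"
  proof (rule integral_cong_AE)
    show "AE x in lborel. indicator {0..<2*pi} (2*pi + (-1) * x) * h (2*pi + (-1) * x) =
        indicator {0..<2*pi} x * h (- x)"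
      using AE_lborel_singleton[of 0] AE_lborel_singleton[of "2*pi"]
    proof eventually_elim
      case (elim x)
      have "h (2*pi + (-1) * x) = h (-x)" using per[of "-x"] by (simp add: add.commute)
      then show ?case using elim by (auto simp: indicator_def)
    qed
  qed measurable
  finally show ?thesis ..
qed

context vw begin

lemma rot_meas: "(\<lambda>p. rot v w (fst p) (snd p)) \<in> borel_measurable borel"
  by (rule borel_measurable_continuous_onI[OF rot_cont])

lemma avg_fubini:
  fixes m :: "(real^'n) measure" and g :: "real^'n \<Rightarrow> real"
  assumes sm: "sets m = sets borel" and fm: "finite_measure m"
    and inv: "\<And>t. distr m m (rot v w t) = m"
    and gm[measurable]: "g \<in> borel_measurable borel" and gb: "\<And>x. \<bar>g x\<bar> \<le> B"
  shows "(\<integral>x. (\<integral>t. indicator {0..<2*pi} t * g (rot v w t x) \<partial>lborel) \<partial>m) = 2*pi * (\<integral>x. g x \<partial>m)"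
proof -
  define I where "I = restrict_space lborel {0..<2*pi}"
  have I_int: "integral\<^sup>L I f = (\<integral>t. indicator {0..<2*pi} t * f t \<partial>lborel)" for f :: "real \<Rightarrow> real"
    unfolding I_def by (subst integral_restrict_space) auto
  have fI: "finite_measure I"
    unfolding I_def by (rule finite_measureI) (simp add: emeasure_restrict_space)
  interpret I: finite_measure I by (rule fI)
  interpret m: finite_measure m by (rule fm)
  interpret P: pair_sigma_finite I m by unfold_locales
  have mb: "measurable m N = measurable borel N" for N :: "'b measure"
    by (rule measurable_cong_sets[OF sm refl])
  have G0: "(\<lambda>p. g (rot v w (fst p) (snd p))) \<in> borel_measurable borel"
    by (rule measurable_compose[OF rot_meas gm])
  have G: "(\<lambda>p. g (rot v w (fst p) (snd p))) \<in> borel_measurable (borel \<Otimes>\<^sub>M borel)"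
    using G0 by (simp only: borel_prod)
  have id: "(\<lambda>p. p) \<in> measurable (I \<Otimes>\<^sub>M m) (borel \<Otimes>\<^sub>M borel)"
  proof -
    have i1: "(\<lambda>x. x) \<in> measurable I borel"
      unfolding I_def by (rule measurable_restrict_space1[OF measurable_ident_sets[OF sets_lborel]])
    have i2: "(\<lambda>x. x) \<in> measurable m borel"
      by (rule measurable_ident_sets[OF sm])
    have "(\<lambda>p. (fst p, snd p)) \<in> measurable (I \<Otimes>\<^sub>M m) (borel \<Otimes>\<^sub>M borel)"
      by (rule measurable_Pair[OF measurable_compose[OF measurable_fst i1] measurable_compose[OF measurable_snd i2]])
    then show ?thesis by simp
  qed
  have GP: "(\<lambda>p. g (rot v w (fst p) (snd p))) \<in> borel_measurable (I \<Otimes>\<^sub>M m)"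
    by (rule measurable_compose[OF id G])
  have integ: "integrable (I \<Otimes>\<^sub>M m) (\<lambda>(t, x). g (rot v w t x))"
  proof -
    have "integrable (I \<Otimes>\<^sub>M m) (\<lambda>p. g (rot v w (fst p) (snd p)))"
      by (rule finite_measure.integrable_const_bound[OF finite_measure_pair_measure[OF fm fI], of _ B])
         (use gb GP in auto)
    then show ?thesis by (simp add: case_prod_beta')
  qed
  have "(\<integral>x. (\<integral>t. g (rot v w t x) \<partial>I) \<partial>m) = (\<integral>t. (\<integral>x. g (rot v w t x) \<partial>m) \<partial>I)"
    using P.Fubini_integral[OF integ] by simp
  also have "\<dots> = (\<integral>t. (\<integral>x. g x \<partial>m) \<partial>I)"
  proof -
    have "(\<integral>x. g (rot v w t x) \<partial>m) = (\<integral>x. g x \<partial>m)" for t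
    proof -
      have rm: "rot v w t \<in> measurable m m"
      proof -
        have "rot v w t \<in> borel_measurable borel"
          by (rule borel_measurable_continuous_onI[OF linear_continuous_on[OF linear_conv_bounded_linear[THEN iffD1, OF rot_linear]]])
        then show ?thesis using measurable_cong_sets[OF sm sm] by simp
      qed
      show ?thesis
        proof -
        have gmm: "g \<in> borel_measurable m" by (subst measurable_cong_sets[OF sm refl]) (rule gm)
        show ?thesis using integral_distr[OF rm gmm] inv[of t] by simp
      qed
    qed
    then show ?thesis by simp
  qed
  also have "\<dots> = 2*pi * (\<integral>x. g x \<partial>m)"
    by (simp add: I_def measure_restrict_space)
  finally show ?thesis unfolding I_int .
qed

end

lemma distr_eqI_borel:
  fixes m :: "('a::topological_space) measure"
  assumes sm: "sets m = sets borel" and T: "T \<in> measurable borel borel"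
    and e: "\<And>A. A \<in> sets borel \<Longrightarrow> emeasure m (T -` A) = emeasure m A"
  shows "distr m m T = m"
proof -
  have sp: "space m = UNIV" using sets_eq_imp_space_eq[OF sm] by simp
  have Tm: "T \<in> measurable m m" using T measurable_cong_sets[OF sm sm] by simp
  show ?thesis
  proof (rule measure_eqI)
    show "sets (distr m m T) = sets m" by simp
    fix A assume "A \<in> sets (distr m m T)"
    then have A: "A \<in> sets borel" using sm by simp
    show "emeasure (distr m m T) A = emeasure m A"
      using emeasure_distr[OF Tm, of A] A sm e[OF A] sp by simp
  qed
qed

lemma hp_reflect_cont: "continuous_on UNIV (hp_reflect v)"
  unfolding hp_reflect_def by (intro continuous_intros)

lemma hp_reflect_meas: "hp_reflect v \<in> borel_measurable borel"
  by (rule borel_measurable_continuous_onI[OF hp_reflect_cont])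

context vw begin

lemma rot_cont_t: "continuous_on UNIV (\<lambda>t. rot v w t y)"
  unfolding rot_def by (intro continuous_intros)

lemma refl_int:
  fixes m :: "(real^'n) measure" and g :: "real^'n \<Rightarrow> real"
  assumes sm: "sets m = sets borel" and fm: "finite_measure m"
    and inv: "\<And>t. distr m m (rot v w t) = m"
    and gm[measurable]: "g \<in> borel_measurable borel" and gb: "\<And>x. \<bar>g x\<bar> \<le> B"
  shows "(\<integral>x. g (hp_reflect v x) \<partial>m) = (\<integral>x. g x \<partial>m)"
proof -
  have gsm: "(\<lambda>x. g (hp_reflect v x)) \<in> borel_measurable borel"
    by (rule measurable_compose[OF hp_reflect_meas gm])
  have hm: "(\<lambda>t. g (rot v w t y)) \<in> borel_measurable borel" for y
    by (rule measurable_compose[OF borel_measurable_continuous_onI[OF rot_cont_t] gm])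
  have hper: "g (rot v w (t + 2*pi) y) = g (rot v w t y)" for t y by (simp add: rot_periodic)
  have eq: "(\<integral>t. indicator {0..<2*pi} t * g (hp_reflect v (rot v w t x)) \<partial>lborel) =
            (\<integral>t. indicator {0..<2*pi} t * g (rot v w t x) \<partial>lborel)" for x
  proof -
    obtain p where p: "-2*pi \<le> p" "p \<le> 2*pi" "hp_reflect v x = rot v w p x" using refl_orbit by blast
    have "(\<integral>t. indicator {0..<2*pi} t * g (hp_reflect v (rot v w t x)) \<partial>lborel) =
          (\<integral>t. indicator {0..<2*pi} t * g (rot v w (-t) (hp_reflect v x)) \<partial>lborel)"
      by (simp add: refl_rot)
    also have "\<dots> = (\<integral>t. indicator {0..<2*pi} t * g (rot v w t (hp_reflect v x)) \<partial>lborel)"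
      by (rule per_refl[OF hm gb hper])
    also have "\<dots> = (\<integral>t. indicator {0..<2*pi} t * g (rot v w (t + p) x) \<partial>lborel)"
      by (simp add: p(3) rot_add)
    also have "\<dots> = (\<integral>t. indicator {0..<2*pi} t * g (rot v w t x) \<partial>lborel)"
      by (rule per_shift[OF hm gb hper p(1,2)])
    finally show ?thesis .
  qed
  have "2*pi * (\<integral>x. g (hp_reflect v x) \<partial>m) = 2*pi * (\<integral>x. g x \<partial>m)"
    using avg_fubini[OF sm fm inv gsm gb] avg_fubini[OF sm fm inv gm gb] eq by simp
  then show ?thesis by simp
qed

lemma refl_distr:
  fixes m :: "(real^'n) measure"
  assumes sm: "sets m = sets borel" and fm: "finite_measure m"
    and inv: "\<And>t. distr m m (rot v w t) = m"
  shows "distr m m (hp_reflect v) = m"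
proof (rule distr_eqI_borel[OF sm hp_reflect_meas])
  interpret m: finite_measure m by (rule fm)
  have sp: "space m = UNIV" using sets_eq_imp_space_eq[OF sm] by simp
  fix A :: "(real^'n) set" assume A: "A \<in> sets borel"
  have Am: "A \<in> sets m" "hp_reflect v -` A \<in> sets m"
    using A sm measurable_sets[OF hp_reflect_meas A] by auto
  have im: "indicator A \<in> borel_measurable borel" using A by simp
  have "(\<integral>x. indicator A (hp_reflect v x) \<partial>m) = (\<integral>x. indicator A x \<partial>m :: real)"
    by (rule refl_int[OF sm fm inv im, of 1]) (simp add: indicator_def)
  then have "measure m (hp_reflect v -` A) = measure m A"
    using Am sp by (simp add: indicator_vimage[symmetric] comp_def)
  then show "emeasure m (hp_reflect v -` A) = emeasure m A"
    by (simp add: m.emeasure_eq_measure)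
qed

end

lemma convex_pair:
  fixes Psi :: "real \<Rightarrow> real"
  assumes cv: "convex_on UNIV Psi" and h1: "a \<le> a'" "b \<le> a'" and h2: "a' + b' = a + b"
  shows "Psi a + Psi b \<le> Psi a' + Psi b'"
proof (cases "a' = b'")
  case True
  then have "a = a'" "b = a'" using h1 h2 by auto
  then show ?thesis using True by simp
next
  case False
  have lt: "b' < a'" using h1 h2 False by auto
  define t where "t = (a - b') / (a' - b')"
  have t01: "0 \<le> t" "t \<le> 1" unfolding t_def using h1 h2 lt by (auto simp: field_simps)
  have tt0: "t * (a' - b') = a - b'" unfolding t_def using lt by simp
  have tt: "t * a' - t * b' = a - b'" using tt0 by (simp add: right_diff_distrib)
  have d1: "(1 - t) * b' = b' - t * b'" by (simp add: algebra_simps)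
  have d2: "(1 - (1 - t)) * b' = t * b'" "(1 - t) * a' = a' - t * a'" by (simp_all add: algebra_simps)
  have ea: "a = (1 - t) *\<^sub>R b' + t *\<^sub>R a'" using tt d1 by simp
  have eb: "b = (1 - (1 - t)) *\<^sub>R b' + (1 - t) *\<^sub>R a'" using tt d2 h2 by simp
  have "Psi a \<le> (1 - t) * Psi b' + t * Psi a'"
    by (subst ea, rule convex_onD[OF cv]) (use t01 in auto)
  moreover have "Psi b \<le> (1 - (1 - t)) * Psi b' + (1 - t) * Psi a'"
    by (subst eb, rule convex_onD[OF cv]) (use t01 in auto)
  ultimately show ?thesis by (simp add: algebra_simps)
qed

locale rs =
  fixes m :: "(real^'n) measure" and v :: "real^'n"
  assumes sm: "sets m = sets borel" and fm: "finite_measure m"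
    and D: "distr m m (hp_reflect v) = m" and vv: "v \<bullet> v = 1"
begin

interpretation m: finite_measure m by (rule fm)

lemma sp: "space m = UNIV" using sets_eq_imp_space_eq[OF sm] by simp

lemma mb: "measurable m N = measurable borel N"
  by (rule measurable_cong_sets[OF sm refl])

lemma s_v: "hp_reflect v x \<bullet> v = - (x \<bullet> v)"
  by (simp add: hp_reflect_def inner_diff_left vv)

lemma s_invol: "hp_reflect v (hp_reflect v x) = x"
proof -
  have "hp_reflect v (hp_reflect v x) = hp_reflect v x + (2 * (x \<bullet> v)) *\<^sub>R v"
    unfolding hp_reflect_def[of v "hp_reflect v x"] s_v by simp
  then show ?thesis by (simp add: hp_reflect_def)
qed

lemma s_inner: "hp_reflect v x \<bullet> hp_reflect v y = x \<bullet> y"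
  by (simp add: hp_reflect_def inner_diff_left inner_diff_right vv inner_commute algebra_simps)

lemma s_inner2: "x \<bullet> hp_reflect v y = hp_reflect v x \<bullet> y"
  by (simp add: hp_reflect_def inner_diff_left inner_diff_right inner_commute algebra_simps)

lemma s_fix: "x \<bullet> v = 0 \<Longrightarrow> hp_reflect v x = x"
  by (simp add: hp_reflect_def)

lemma s_meas_m: "hp_reflect v \<in> measurable m m"
  using hp_reflect_meas[of v] measurable_cong_sets[OF sm sm] by simp

lemma int_refl:
  assumes "h \<in> borel_measurable borel"
  shows "(\<integral>x. h (hp_reflect v x) \<partial>m) = (\<integral>x. h x \<partial>m :: real)"
proof -
  have "h \<in> borel_measurable m" using assms by (simp add: mb)
  from integral_distr[OF s_meas_m this] D show ?thesis by simp
qed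

lemma integrable_refl:
  assumes "integrable m h"
  shows "integrable m (\<lambda>x. h (hp_reflect v x) :: real)"
proof -
  have hm: "h \<in> borel_measurable m" using assms by simp
  from integrable_distr_eq[OF s_meas_m hm] D assms show ?thesis by simp
qed

lemma sym_nonneg:
  assumes hi: "integrable m h" and hp: "\<And>y. 0 \<le> h y + h (hp_reflect v y)"
  shows "0 \<le> (\<integral>y. h y \<partial>m :: real)"
proof -
  have hb: "h \<in> borel_measurable borel" using hi by (simp add: mb[symmetric])
  have "0 \<le> (\<integral>y. h y + h (hp_reflect v y) \<partial>m)" by (rule integral_nonneg_AE) (use hp in auto)
  also have "\<dots> = (\<integral>y. h y \<partial>m) + (\<integral>y. h (hp_reflect v y) \<partial>m)"
    by (rule Bochner_Integration.integral_add[OF hi integrable_refl[OF hi]])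
  also have "\<dots> = 2 * (\<integral>y. h y \<partial>m)" using int_refl[OF hb] by simp
  finally show ?thesis by simp
qed

end

lemma helper1:
  fixes K1 K2 a b :: real
  assumes "K2 \<le> K1"
  shows "0 \<le> K1 * (max a b - a) + K2 * (min b a - b)"
proof (cases "a \<le> b")
  case True
  then have "K2 * (b - a) \<le> K1 * (b - a)" using assms by (intro mult_right_mono) auto
  then show ?thesis using True by (simp add: max_def min_def algebra_simps)
next
  case False then show ?thesis by (simp add: max_def min_def)
qed

lemma helper2:
  fixes K1 K2 a b :: real
  assumes "K2 \<le> K1"
  shows "0 \<le> K1 * (max a b - b) + K2 * (min b a - a)"
  using helper1[OF assms, of b a] by (simp add: max.commute min.commute)

locale rsK = rs m v for m :: "(real^'n) measure" and v +
  fixes K :: "real \<Rightarrow> real" and BK :: real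
  assumes Km[measurable]: "K \<in> borel_measurable borel" and Kb: "\<And>t. \<bar>K t\<bar> \<le> BK"
    and Kmono: "mono K"
begin

interpretation m: finite_measure m by (rule fm)

lemma kern_meas: "(\<lambda>y. K (x \<bullet> y)) \<in> borel_measurable borel"
  by (rule measurable_compose[OF borel_measurable_continuous_onI Km]) (intro continuous_intros)

lemma BK0: "0 \<le> BK" using Kb[of 0] by simp

lemma Kint:
  assumes gi: "integrable m g"
  shows "integrable m (\<lambda>y. K (x \<bullet> y) * g y)"
proof (rule Bochner_Integration.integrable_bound[of m "\<lambda>y. BK * g y"])
  show "integrable m (\<lambda>y. BK * g y)" using gi by simp
  have "g \<in> borel_measurable m" using gi by simp
  moreover have "(\<lambda>y. K (x \<bullet> y)) \<in> borel_measurable m" using kern_meas by (simp add: mb)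
  ultimately show "(\<lambda>y. K (x \<bullet> y) * g y) \<in> borel_measurable m" by simp
  show "AE y in m. norm (K (x \<bullet> y) * g y) \<le> norm (BK * g y)"
    using Kb BK0 by (intro AE_I2) (simp add: abs_mult mult_right_mono)
qed

lemma Kop_refl:
  assumes gi: "integrable m g"
  shows "Kop m K g (hp_reflect v x) = (\<integral>y. K (x \<bullet> y) * g (hp_reflect v y) \<partial>m)"
proof -
  have gb: "g \<in> borel_measurable borel" using gi by (simp add: mb[symmetric])
  have hb: "(\<lambda>y. K (hp_reflect v x \<bullet> y) * g y) \<in> borel_measurable borel"
    using kern_meas gb by simp
  show ?thesis
    unfolding Kop_def using int_refl[OF hb, symmetric] by (simp add: s_inner)
qed

lemma Kdiff: "0 \<le> x \<bullet> v \<Longrightarrow> 0 \<le> y \<bullet> v \<Longrightarrow> K (x \<bullet> hp_reflect v y) \<le> K (x \<bullet> y)"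
proof -
  assume a: "0 \<le> x \<bullet> v" "0 \<le> y \<bullet> v"
  have "x \<bullet> hp_reflect v y = x \<bullet> y - 2 * (y \<bullet> v) * (x \<bullet> v)"
    by (simp add: hp_reflect_def inner_diff_right)
  moreover have "0 \<le> 2 * (y \<bullet> v) * (x \<bullet> v)" using a by simp
  ultimately show ?thesis by (intro monoD[OF Kmono]) simp
qed

lemma fp_sum: "polarization v f y + polarization v f (hp_reflect v y) = f y + f (hp_reflect v y)"
proof -
  consider "y \<bullet> v > 0" | "y \<bullet> v = 0" | "y \<bullet> v < 0" by linarith
  then show ?thesis
  proof cases
    case 1 then show ?thesis by (simp add: polarization_def s_v s_invol)
  next
    case 2 then show ?thesis by (simp add: polarization_def s_fix)
  next
    case 3 then show ?thesis by (simp add: polarization_def s_v s_invol)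
  qed
qed

lemma fp_meas:
  assumes fb[measurable]: "f \<in> borel_measurable borel"
  shows "polarization v f \<in> borel_measurable borel"
proof -
  have [measurable]: "hp_reflect v \<in> borel_measurable borel" by (rule hp_reflect_meas)
  have [measurable]: "(\<lambda>x. x \<bullet> v) \<in> borel_measurable borel"
    by (rule borel_measurable_continuous_onI) (intro continuous_intros)
  show ?thesis unfolding polarization_def[abs_def] by measurable
qed

lemma fp_int:
  assumes fi: "integrable m f"
  shows "integrable m (polarization v f)"
proof (rule Bochner_Integration.integrable_bound[of m "\<lambda>y. \<bar>f y\<bar> + \<bar>f (hp_reflect v y)\<bar>"])
  show "integrable m (\<lambda>y. \<bar>f y\<bar> + \<bar>f (hp_reflect v y)\<bar>)"
    using fi integrable_refl[OF fi] by simp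
  have "f \<in> borel_measurable borel" using fi by (simp add: mb[symmetric])
  then show "polarization v f \<in> borel_measurable m" using fp_meas by (simp add: mb)
  show "AE y in m. norm (polarization v f y) \<le> norm (\<bar>f y\<bar> + \<bar>f (hp_reflect v y)\<bar>)"
    by (intro AE_I2) (auto simp: polarization_def)
qed

end

context rsK begin

interpretation m: finite_measure m by (rule fm)

lemma stepA:
  assumes fi: "integrable m f"
  shows "Kop m K (polarization v f) x + Kop m K (polarization v f) (hp_reflect v x)
       = Kop m K f x + Kop m K f (hp_reflect v x)"
proof -
  have gen: "Kop m K g x + Kop m K g (hp_reflect v x) = (\<integral>y. K (x \<bullet> y) * (g y + g (hp_reflect v y)) \<partial>m)"
    if gi: "integrable m g" for g
  proof -
    have "Kop m K g x + Kop m K g (hp_reflect v x)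
        = (\<integral>y. K (x \<bullet> y) * g y \<partial>m) + (\<integral>y. K (x \<bullet> y) * g (hp_reflect v y) \<partial>m)"
      unfolding Kop_refl[OF gi] by (simp add: Kop_def)
    also have "\<dots> = (\<integral>y. K (x \<bullet> y) * g y + K (x \<bullet> y) * g (hp_reflect v y) \<partial>m)"
      by (rule Bochner_Integration.integral_add[symmetric, OF Kint[OF gi] Kint[OF integrable_refl[OF gi]]])
    also have "\<dots> = (\<integral>y. K (x \<bullet> y) * (g y + g (hp_reflect v y)) \<partial>m)"
      by (simp add: distrib_left)
    finally show ?thesis .
  qed
  show ?thesis unfolding gen[OF fi] gen[OF fp_int[OF fi]] fp_sum ..
qed

lemma stepB1:
  assumes fi: "integrable m f" and xv: "0 \<le> x \<bullet> v"
  shows "Kop m K f x \<le> Kop m K (polarization v f) x"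
proof -
  let ?h = "\<lambda>y. K (x \<bullet> y) * polarization v f y - K (x \<bullet> y) * f y"
  have hi: "integrable m ?h" using Kint[OF fp_int[OF fi]] Kint[OF fi] by simp
  have pw: "0 \<le> ?h y + ?h (hp_reflect v y)" for y
  proof -
    have pos: "0 \<le> ?h y + ?h (hp_reflect v y)" if yv: "0 < y \<bullet> v" for y
    proof -
      have "K (x \<bullet> hp_reflect v y) \<le> K (x \<bullet> y)" using Kdiff xv yv by simp
      from helper1[OF this, of "f y" "f (hp_reflect v y)"] show ?thesis
        using yv by (simp add: polarization_def s_v s_invol algebra_simps)
    qed
    consider "y \<bullet> v > 0" | "y \<bullet> v = 0" | "y \<bullet> v < 0" by linarith
    then show ?thesis
    proof cases
      case 1 then show ?thesis using pos by blast
    next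
      case 2 then show ?thesis by (simp add: polarization_def s_fix)
    next
      case 3
      then have "0 < hp_reflect v y \<bullet> v" by (simp add: s_v)
      from pos[OF this] show ?thesis by (simp add: s_invol add.commute)
    qed
  qed
  have "0 \<le> (\<integral>y. ?h y \<partial>m)" by (rule sym_nonneg[OF hi pw])
  also have "\<dots> = Kop m K (polarization v f) x - Kop m K f x"
    unfolding Kop_def by (rule Bochner_Integration.integral_diff[OF Kint[OF fp_int[OF fi]] Kint[OF fi]])
  finally show ?thesis by simp
qed

lemma stepB2:
  assumes fi: "integrable m f" and xv: "0 \<le> x \<bullet> v"
  shows "Kop m K f (hp_reflect v x) \<le> Kop m K (polarization v f) x"
proof -
  let ?h = "\<lambda>y. K (x \<bullet> y) * polarization v f y - K (x \<bullet> y) * f (hp_reflect v y)"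
  have hi: "integrable m ?h" using Kint[OF fp_int[OF fi]] Kint[OF integrable_refl[OF fi]] by simp
  have pw: "0 \<le> ?h y + ?h (hp_reflect v y)" for y
  proof -
    have pos: "0 \<le> ?h y + ?h (hp_reflect v y)" if yv: "0 < y \<bullet> v" for y
    proof -
      have "K (x \<bullet> hp_reflect v y) \<le> K (x \<bullet> y)" using Kdiff xv yv by simp
      from helper2[OF this, of "f y" "f (hp_reflect v y)"] show ?thesis
        using yv by (simp add: polarization_def s_v s_invol algebra_simps)
    qed
    consider "y \<bullet> v > 0" | "y \<bullet> v = 0" | "y \<bullet> v < 0" by linarith
    then show ?thesis
    proof cases
      case 1 then show ?thesis using pos by blast
    next
      case 2 then show ?thesis by (simp add: polarization_def s_fix)
    next
      case 3
      then have "0 < hp_reflect v y \<bullet> v" by (simp add: s_v)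
      from pos[OF this] show ?thesis by (simp add: s_invol add.commute)
    qed
  qed
  have "0 \<le> (\<integral>y. ?h y \<partial>m)" by (rule sym_nonneg[OF hi pw])
  also have "\<dots> = Kop m K (polarization v f) x - Kop m K f (hp_reflect v x)"
    unfolding Kop_refl[OF fi] unfolding Kop_def
    by (rule Bochner_Integration.integral_diff[OF Kint[OF fp_int[OF fi]] Kint[OF integrable_refl[OF fi]]])
  finally show ?thesis by simp
qed

lemma Kop_bound:
  assumes gi: "integrable m g"
  shows "\<bar>Kop m K g x\<bar> \<le> BK * (\<integral>y. \<bar>g y\<bar> \<partial>m)"
proof -
  have "\<bar>Kop m K g x\<bar> \<le> (\<integral>y. BK * \<bar>g y\<bar> \<partial>m)"
    unfolding Kop_def
    by (rule integral_abs_bound_integral[OF Kint[OF gi]]) (use gi Kb BK0 in \<open>auto simp: abs_mult intro: mult_right_mono\<close>)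
  then show ?thesis by simp
qed

lemma Kop_meas:
  assumes gi: "integrable m g"
  shows "Kop m K g \<in> borel_measurable borel"
proof -
  have gb[measurable]: "g \<in> borel_measurable borel" using gi by (simp add: mb[symmetric])
  have ip[measurable]: "(\<lambda>p::(real^'n) \<times> (real^'n). fst p \<bullet> snd p) \<in> borel_measurable borel"
    by (rule borel_measurable_continuous_onI) (intro continuous_intros)
  have sn[measurable]: "(snd :: (real^'n) \<times> (real^'n) \<Rightarrow> _) \<in> measurable borel borel"
    by (rule borel_measurable_continuous_onI) (intro continuous_intros)
  have F: "(\<lambda>p::(real^'n) \<times> (real^'n). K (fst p \<bullet> snd p) * g (snd p)) \<in> borel_measurable borel"
    using borel_measurable_times[OF measurable_compose[OF ip Km] measurable_compose[OF sn gb]] by simp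
  have S: "sets (m \<Otimes>\<^sub>M m) = sets (borel :: ((real^'n) \<times> (real^'n)) measure)"
    by (subst borel_prod[symmetric]) (rule sets_pair_measure_cong[OF sm sm])
  have F': "(\<lambda>(x, y). K (x \<bullet> y) * g y) \<in> borel_measurable (m \<Otimes>\<^sub>M m)"
    unfolding measurable_cong_sets[OF S refl] case_prod_beta' by (rule F)
  have "(\<lambda>x. \<integral>y. K (x \<bullet> y) * g y \<partial>m) \<in> borel_measurable m"
    by (rule m.borel_measurable_lebesgue_integral[OF F'])
  then show ?thesis
    unfolding Kop_def[abs_def] measurable_cong_sets[OF sm refl] .
qed

end

theorem theorem5:
  fixes R :: real and m :: "(real^'n) measure" and Psi K :: "real \<Rightarrow> real"
    and f :: "real^'n \<Rightarrow> real" and i :: 'n and v :: "real^'n"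
  assumes "CARD('n) \<ge> 2"
    and "R > 0"
    and "uniform_sphere_measure R m"
    and "convex_on UNIV Psi"
    and "uniformly_continuous_on UNIV Psi"
    and "integrable m f"
    and "\<forall>x \<in> sphere 0 R. f x \<in> {0..1}"
    and "mono K"
    and "bounded (range K)"
    and "K \<in> borel_measurable borel"
    and "norm v = 1"
    and "v \<bullet> axis i R > 0"
  shows "(\<integral>x. Psi (Kop m K f x) \<partial>m) \<le> (\<integral>x. Psi (Kop m K (polarization v f) x) \<partial>m)"
proof -
  note card = assms(1) and um = assms(3) and cv = assms(4) and uc = assms(5) and fi = assms(6)
    and Kmono = assms(8) and Kbd = assms(9) and Km = assms(10) and nv = assms(11)
  have sm: "sets m = sets borel" and fm: "finite_measure m"
    and inv: "\<And>T A. orthogonal_transformation T \<Longrightarrow> det (matrix T) = 1 \<Longrightarrow> A \<in> sets m \<Longrightarrow>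
                emeasure m (T -` A) = emeasure m A"
    using um unfolding uniform_sphere_measure_def by auto
  interpret m: finite_measure m by (rule fm)
  have vv: "v \<bullet> v = 1" using nv by (metis norm_eq_1)
  obtain y :: "real^'n" where y: "y \<noteq> 0" "orthogonal v y"
    using orthogonal_to_vector_exists[of v] card by auto
  define w where "w = y /\<^sub>R norm y"
  have ww: "w \<bullet> w = 1" unfolding w_def using y(1) by (simp add: inner_commute power2_norm_eq_inner[symmetric] power2_eq_square)
  have vw0: "v \<bullet> w = 0" unfolding w_def using y(2) by (simp add: orthogonal_def)
  interpret vw v w by unfold_locales (use vv ww vw0 in auto)
  have invrot: "distr m m (rot v w t) = m" for t
  proof (rule distr_eqI_borel[OF sm])
    show "rot v w t \<in> borel_measurable borel"
      by (rule borel_measurable_continuous_onI[OF linear_continuous_on[OF linear_conv_bounded_linear[THEN iffD1, OF rot_linear]]])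
    fix A :: "(real^'n) set" assume "A \<in> sets borel"
    then show "emeasure m (rot v w t -` A) = emeasure m A"
      using inv[OF rot_orth rot_det] sm by simp
  qed
  have D: "distr m m (hp_reflect v) = m" by (rule refl_distr[OF sm fm invrot])
  obtain BK where BK: "\<And>t. \<bar>K t\<bar> \<le> BK"
    using Kbd unfolding bounded_iff by auto
  interpret rsK m v K BK
    by unfold_locales (use sm fm D vv Km BK Kmono in auto)
  define fp where "fp = polarization v f"
  have fpi: "integrable m fp" unfolding fp_def by (rule fp_int[OF fi])
  define C where "C = BK * max (\<integral>y. \<bar>f y\<bar> \<partial>m) (\<integral>y. \<bar>fp y\<bar> \<partial>m)"
  have Cf: "\<bar>Kop m K f x\<bar> \<le> C" for x
    using Kop_bound[OF fi, of x] BK0 unfolding C_def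
    by (meson max.cobounded1 mult_left_mono order_trans)
  have Cp: "\<bar>Kop m K fp x\<bar> \<le> C" for x
    using Kop_bound[OF fpi, of x] BK0 unfolding C_def
    by (meson max.cobounded2 mult_left_mono order_trans)
  have Pc: "continuous_on UNIV Psi" by (rule uniformly_continuous_imp_continuous[OF uc])
  have "bounded (Psi ` {-C..C})"
    by (rule compact_imp_bounded[OF compact_continuous_image[OF continuous_on_subset[OF Pc] compact_Icc]]) simp
  then obtain M where M: "\<And>t. t \<in> {-C..C} \<Longrightarrow> \<bar>Psi t\<bar> \<le> M" unfolding bounded_iff by (metis image_eqI real_norm_def)
  have Pm: "Psi \<in> borel_measurable borel" by (rule borel_measurable_continuous_onI[OF Pc])
  have Gi: "integrable m (\<lambda>x. Psi (Kop m K g x))" if gi: "integrable m g" and gC: "\<And>x. \<bar>Kop m K g x\<bar> \<le> C" for g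
  proof (rule m.integrable_const_bound[of _ M])
    have "norm (Psi (Kop m K g x)) \<le> M" for x
    proof -
      have "Kop m K g x \<in> {-C..C}" using gC[of x] by (simp add: abs_le_iff)
      from M[OF this] show ?thesis by simp
    qed
    then show "AE x in m. norm (Psi (Kop m K g x)) \<le> M" by simp
    have "(\<lambda>x. Psi (Kop m K g x)) \<in> borel_measurable borel"
      by (rule measurable_compose[OF Kop_meas[OF gi] Pm])
    then show "(\<lambda>x. Psi (Kop m K g x)) \<in> borel_measurable m" by (simp add: mb)
  qed
  let ?h = "\<lambda>x. Psi (Kop m K fp x) - Psi (Kop m K f x)"
  have hi: "integrable m ?h" using Gi[OF fpi Cp] Gi[OF fi Cf] by simp
  have pw: "0 \<le> ?h x + ?h (hp_reflect v x)" for x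
  proof -
    have pos: "0 \<le> ?h x + ?h (hp_reflect v x)" if xv: "0 \<le> x \<bullet> v" for x
    proof -
      have "Psi (Kop m K f x) + Psi (Kop m K f (hp_reflect v x))
           \<le> Psi (Kop m K fp x) + Psi (Kop m K fp (hp_reflect v x))"
        unfolding fp_def
        by (rule convex_pair[OF cv stepB1[OF fi xv] stepB2[OF fi xv]]) (use stepA[OF fi, of x] in simp)
      then show ?thesis by simp
    qed
    show ?thesis
    proof (cases "0 \<le> x \<bullet> v")
      case True then show ?thesis using pos by blast
    next
      case False
      then have "0 \<le> hp_reflect v x \<bullet> v" by (simp add: s_v)
      from pos[OF this] show ?thesis by (simp add: s_invol add.commute)
    qed
  qed
  have "0 \<le> (\<integral>x. ?h x \<partial>m)" by (rule sym_nonneg[OF hi pw])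
  also have "\<dots> = (\<integral>x. Psi (Kop m K fp x) \<partial>m) - (\<integral>x. Psi (Kop m K f x) \<partial>m)"
    by (rule Bochner_Integration.integral_diff[OF Gi[OF fpi Cp] Gi[OF fi Cf]])
  finally show ?thesis unfolding fp_def by simp
qed


end
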